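(* Let $N,M,D\ge 1$ and let $T:\mathbb{R}^{M}\times\cdots\times\mathbb{R}^{M}\to\mathbb{R}^D$ ($N$ factors) be a real $N$-linear map, written $T(a^{(1)},\dots,a^{(N)})_i=\sum_{s\in\{1,\dots,M\}^N}T_{i,s}\prod_{k=1}^N a^{(k)}_{s_k}$, which is a contraction with respect to the Euclidean norm, i.e. $\|T(a^{(1)},\dots,a^{(N)})\|\le\prod_{k=1}^N\|a^{(k)}\|$ for all $a^{(1)},\dots,a^{(N)}\in\mathbb{R}^M$. Then every local hidden variable (LHV) model satisfies $$\Big\|\big\langle T(A^{(1)},\dots,A^{(N)})\big\rangle\Big\|^2\le\Big\langle\prod_{k=1}^N\|A^{(k)}\|^2\Big\rangle,$$ i.e. $\sum_{i=1}^D\Big(\sum_{s}T_{i,s}\big\langle\prod_{k}A^{(k)}_{s_k}\big\rangle\Big)^2\le\sum_{s}\big\langle\prod_k (A^{(k)}_{s_k})^2\big\rangle$, whenever the right-hand side is finite.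
   Context: Setting: $N$ parties, each with $M$ observables. An LHV model is a probability space $(\Lambda,\mu)$ together with real-valued measurable functions $A^{(k)}_j:\Lambda\to\mathbb{R}$ ($k=1,\dots,N$ the site, $j=1,\dots,M$ the observable), $A^{(k)}_j(\lambda)$ being the value assigned to the $j$-th observable at site $k$; $A^{(k)}=(A^{(k)}_1,\dots,A^{(k)}_M)\in\mathbb{R}^M$, and $\langle\cdot\rangle$ denotes expectation with respect to $\mu$. $\|\cdot\|$ is the Euclidean norm. *)

theory Defs
  imports "HOL-Probability.Probability"
begin

text \<open>Vectors in R^n are represented as functions nat => real, only indices j < n matter.
  Multi-indices s in {1..M}^N are represented as extensional functions {0..<N} -> {0..<M}.\<close>

definition vnorm :: "nat \<Rightarrow> (nat \<Rightarrow> real) \<Rightarrow> real" where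
  "vnorm n v = sqrt (\<Sum>j<n. (v j)\<^sup>2)"

definition multilin :: "nat \<Rightarrow> nat \<Rightarrow> (nat \<Rightarrow> (nat \<Rightarrow> nat) \<Rightarrow> real) \<Rightarrow> (nat \<Rightarrow> nat \<Rightarrow> real) \<Rightarrow> nat \<Rightarrow> real" where
  "multilin N M T a i = (\<Sum>s\<in>{0..<N} \<rightarrow>\<^sub>E {0..<M}. T i s * (\<Prod>k<N. a k (s k)))"

end

theory Submission
  imports Defs
begin

lemma vnorm_L2: "vnorm n v = L2_set v {..<n}"
  by (simp add: vnorm_def L2_set_def)

lemma abs_le_vnorm: "i < n \<Longrightarrow> \<bar>v i\<bar> \<le> vnorm n v"
proof -
  assume "i < n"
  hence "(v i)\<^sup>2 \<le> (\<Sum>j<n. (v j)\<^sup>2)"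
    by (intro member_le_sum) auto
  hence "sqrt ((v i)\<^sup>2) \<le> sqrt (\<Sum>j<n. (v j)\<^sup>2)" by (rule real_sqrt_le_mono)
  thus ?thesis by (simp add: vnorm_def)
qed

theorem proposition1:
  fixes N M D :: nat
    and T :: "nat \<Rightarrow> (nat \<Rightarrow> nat) \<Rightarrow> real"
    and \<mu> :: "'l measure"
    and A :: "nat \<Rightarrow> nat \<Rightarrow> 'l \<Rightarrow> real"
  assumes "N \<ge> 1" and "M \<ge> 1" and "D \<ge> 1"
    and contraction: "\<And>a. vnorm D (multilin N M T a) \<le> (\<Prod>k<N. vnorm M (a k))"
    and "prob_space \<mu>"
    and meas: "\<And>k j. k < N \<Longrightarrow> j < M \<Longrightarrow> A k j \<in> borel_measurable \<mu>"
    and finite_rhs: "integrable \<mu> (\<lambda>l. \<Prod>k<N. (vnorm M (\<lambda>j. A k j l))\<^sup>2)"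
  shows "(vnorm D (\<lambda>i. \<integral>l. multilin N M T (\<lambda>k j. A k j l) i \<partial>\<mu>))\<^sup>2
           \<le> (\<integral>l. (\<Prod>k<N. (vnorm M (\<lambda>j. A k j l))\<^sup>2) \<partial>\<mu>)"
proof -
  interpret prob_space \<mu> by fact
  define X where "X i l = multilin N M T (\<lambda>k j. A k j l) i" for i l
  define Q where "Q l = (\<Prod>k<N. (vnorm M (\<lambda>j. A k j l))\<^sup>2)" for l
  define P where "P l = (\<Prod>k<N. vnorm M (\<lambda>j. A k j l))" for l
  have Pnn: "P l \<ge> 0" for l
    unfolding P_def by (intro prod_nonneg) (simp add: vnorm_def sum_nonneg)
  have PQ: "(P l)\<^sup>2 = Q l" for l
    unfolding P_def Q_def by (simp add: prod_power_distrib)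
  have XP: "vnorm D (\<lambda>i. X i l) \<le> P l" for l
    unfolding X_def P_def using contraction[of "\<lambda>k j. A k j l"] by simp
  have Xmeas: "X i \<in> borel_measurable \<mu>" for i
  proof -
    have "(\<lambda>l. T i s * (\<Prod>k<N. A k (s k) l)) \<in> borel_measurable \<mu>"
      if "s \<in> {0..<N} \<rightarrow>\<^sub>E {0..<M}" for s
      using that by (intro borel_measurable_times borel_measurable_const borel_measurable_prod)
        (auto intro!: meas)
    thus ?thesis unfolding X_def multilin_def
      by (intro borel_measurable_sum) auto
  qed
  have Pmeas: "P \<in> borel_measurable \<mu>"
    unfolding P_def vnorm_def
  proof (intro borel_measurable_prod)
    fix k assume "k \<in> {..<N}"
    hence "(\<lambda>x. \<Sum>j<M. (A k j x)\<^sup>2) \<in> borel_measurable \<mu>"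
      by (auto intro!: meas borel_measurable_sum borel_measurable_power)
    thus "(\<lambda>x. sqrt (\<Sum>j<M. (A k j x)\<^sup>2)) \<in> borel_measurable \<mu>"
      by (rule measurable_compose[OF _ borel_measurable_sqrt])
  qed
  have Qint: "integrable \<mu> Q" using finite_rhs unfolding Q_def .
  have Pint: "integrable \<mu> P"
  proof (rule Bochner_Integration.integrable_bound[where f="\<lambda>l. 1 + Q l"])
    show "integrable \<mu> (\<lambda>l. 1 + Q l)" using Qint by simp
    show "P \<in> borel_measurable \<mu>" by fact
    show "AE x in \<mu>. norm (P x) \<le> norm (1 + Q x)"
    proof (intro AE_I2)
      fix x
      have "P x \<le> 1 + (P x)\<^sup>2" 
      proof -
        have "0 \<le> (P x - 1)\<^sup>2" by simp
        hence "0 \<le> (P x)\<^sup>2 - 2 * P x + 1" by (simp add: power2_diff)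
        thus ?thesis using Pnn[of x] by linarith
      qed
      thus "norm (P x) \<le> norm (1 + Q x)" using Pnn[of x] PQ[of x]
        by (simp add: abs_of_nonneg add_nonneg_nonneg)
    qed
  qed
  have Xint: "integrable \<mu> (X i)" if "i < D" for i
  proof (rule Bochner_Integration.integrable_bound[OF Pint Xmeas], intro AE_I2)
    fix x
    show "norm (X i x) \<le> norm (P x)"
      using abs_le_vnorm[OF that, of "\<lambda>i. X i x"] XP[of x] Pnn[of x] by simp
  qed
  define c where "c i = (\<integral>l. X i l \<partial>\<mu>)" for i
  have cnn: "vnorm D c \<ge> 0" by (simp add: vnorm_def sum_nonneg)
  have EPnn: "expectation P \<ge> 0" using Pnn by (simp add: integral_nonneg_AE)
  have "(vnorm D c)\<^sup>2 = (\<Sum>i<D. c i * c i)"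
    by (simp add: vnorm_def power2_eq_square sum_nonneg)
  also have "\<dots> = (\<integral>l. (\<Sum>i<D. c i * X i l) \<partial>\<mu>)"
    
    by (subst Bochner_Integration.integral_sum) (auto simp: c_def intro!: integrable_mult_right Xint)
  also have "\<dots> \<le> (\<integral>l. vnorm D c * P l \<partial>\<mu>)"
  proof (rule integral_mono)
    show "integrable \<mu> (\<lambda>l. \<Sum>i<D. c i * X i l)" by (intro Bochner_Integration.integrable_sum integrable_mult_right Xint) simp
    show "integrable \<mu> (\<lambda>l. vnorm D c * P l)" by (intro integrable_mult_right Pint)
    fix l
    have "(\<Sum>i<D. c i * X i l) \<le> (\<Sum>i<D. \<bar>c i\<bar> * \<bar>X i l\<bar>)"
      by (intro sum_mono) (simp add: abs_mult[symmetric])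
    also have "\<dots> \<le> vnorm D c * vnorm D (\<lambda>i. X i l)"
      unfolding vnorm_L2 by (rule L2_set_mult_ineq)
    also have "\<dots> \<le> vnorm D c * P l"
      using XP[of l] cnn by (intro mult_left_mono) auto
    finally show "(\<Sum>i<D. c i * X i l) \<le> vnorm D c * P l" .
  qed
  also have "\<dots> = vnorm D c * expectation P" by simp
  finally have le1: "(vnorm D c)\<^sup>2 \<le> vnorm D c * expectation P" .
  have le2: "vnorm D c \<le> expectation P"
  proof (cases "vnorm D c = 0")
    case True thus ?thesis using EPnn by simp
  next
    case False
    hence "vnorm D c > 0" using cnn by simp
    thus ?thesis using le1 by (simp add: power2_eq_square)
  qed
  have "(vnorm D c)\<^sup>2 \<le> (expectation P)\<^sup>2"
    using le2 cnn by (intro power_mono) auto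
  also have "\<dots> \<le> expectation (\<lambda>l. (P l)\<^sup>2)"
  proof -
    have "variance P = expectation (\<lambda>l. (P l)\<^sup>2) - (expectation P)\<^sup>2"
      using Pint Qint PQ by (intro variance_eq) simp_all
    thus ?thesis using variance_positive[of P] by simp
  qed
  also have "\<dots> = expectation Q" using PQ by simp
  finally show ?thesis unfolding c_def X_def Q_def .
qed

end
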